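(* Let $d\ge1$, $\boldsymbol\nu\in\mathbb C^d$, $\boldsymbol m=(m_1,\dots,m_{d+1})\in\mathbb Z^{d+1}$. If there is $a\in[-\frac12,|m_{d+1}|]$ such that $\frac12(-\frac12-a)<\operatorname{Re}\nu_l<\frac12(|m_l|-a)$ for all $l=1,\dots,d$, then for every $x>0$ the integral $$j_{\boldsymbol\nu,\boldsymbol m}(x)=2^d\int_{\mathbb R_+^d}j_{(0,m_{d+1})}(xy_1\cdots y_d)\prod_{l=1}^dy_l^{2\nu_l-1}j_{(0,m_l)}(xy_l^{-1})\,dy_d\cdots dy_1$$ converges absolutely.
   Context: For $m\in\mathbb Z$ and $x>0$, $j_{(0,m)}(x)=2\pi i^mJ_m(4\pi x)$, where $J_m$ is the classical $J$-Bessel function. *)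

theory Defs
  imports "HOL-Analysis.Analysis"
begin

definition besselJ_nat :: "nat \<Rightarrow> real \<Rightarrow> real" where
  "besselJ_nat n x = (\<Sum>k. (-1)^k / (fact k * fact (k + n)) * (x / 2) ^ (2 * k + n))"

definition besselJ :: "int \<Rightarrow> real \<Rightarrow> real" where
  "besselJ m x = (if 0 \<le> m then besselJ_nat (nat m) x
                  else (-1) ^ nat (- m) * besselJ_nat (nat (- m)) x)"

definition j0 :: "int \<Rightarrow> real \<Rightarrow> complex" where
  "j0 m x = 2 * complex_of_real pi * (\<i> powi m) * complex_of_real (besselJ m (4 * pi * x))"

end

theory Submission
  imports Defs "HOL-Complex_Analysis.Cauchy_Integral_Theorem"
begin



definition bc :: "nat \<Rightarrow> nat \<Rightarrow> real" where
 "bc n j = (if n \<le> j \<and> even (j - n) then (-1)^((j-n) div 2) / (fact ((j-n) div 2) * fact ((j-n) div 2 + n) * 2^j) else 0)"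

lemma bc_term: "bc n (2*k+n) * x^(2*k+n) = (-1)^k / (fact k * fact (k + n)) * (x / 2) ^ (2 * k + n)"
  by (simp add: bc_def power_divide)

lemma bessel_term_summable: "summable (\<lambda>k. (-1)^k / (fact k * fact (k + n)) * ((x::real) / 2) ^ (2 * k + n))"
proof (rule summable_comparison_test)
  show "summable (\<lambda>k. \<bar>x/2\<bar>^n * (inverse (fact k) * ((x/2)^2)^k))"
    by (intro summable_mult summable_exp)
  show "\<exists>N. \<forall>k\<ge>N. norm ((-1)^k / (fact k * fact (k + n)) * (x / 2) ^ (2 * k + n)) \<le> \<bar>x/2\<bar>^n * (inverse (fact k) * ((x/2)^2)^k)"
  proof (intro exI allI impI)
    fix k :: nat
    have f1: "(1::real) \<le> fact (k+n)" by simp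
    have pa: "\<bar>(x/2)^(2*k+n)\<bar> = \<bar>x/2\<bar>^n * ((x/2)^2)^k"
    proof -
      have "\<bar>(x/2)^(2*k+n)\<bar> = \<bar>x/2\<bar>^(2*k) * \<bar>x/2\<bar>^n" by (simp add: power_abs power_add abs_mult)
      also have "\<bar>x/2\<bar>^(2*k) = ((x/2)^2)^k" by (metis power_mult power2_abs)
      finally show ?thesis by simp
    qed
    have "norm ((-1)^k / (fact k * fact (k + n)) * (x / 2) ^ (2 * k + n)) = \<bar>(x/2)^(2*k+n)\<bar> / (fact k * fact (k + n))"
      by (simp add: abs_mult abs_divide)
    also have "\<dots> = (\<bar>x/2\<bar>^n * (inverse (fact k) * ((x/2)^2)^k)) / fact (k+n)"
      unfolding pa by (simp add: field_simps)
    also have "\<dots> \<le> \<bar>x/2\<bar>^n * (inverse (fact k) * ((x/2)^2)^k)"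
      using frac_le[of "\<bar>x/2\<bar>^n * (inverse (fact k) * ((x/2)^2)^k)" "\<bar>x/2\<bar>^n * (inverse (fact k) * ((x/2)^2)^k)" 1 "fact (k+n)"] f1 by simp
    finally show "norm ((-1)^k / (fact k * fact (k + n)) * (x / 2) ^ (2 * k + n)) \<le> \<bar>x/2\<bar>^n * (inverse (fact k) * ((x/2)^2)^k)" .
  qed
qed

lemma bc_sums: "(\<lambda>j. bc n j * x^j) sums besselJ_nat n x"
proof -
  have sm: "strict_mono (\<lambda>k::nat. 2*k+n)" by (auto simp: strict_mono_def)
  have z: "bc n j * x^j = 0" if "j \<notin> range (\<lambda>k::nat. 2*k+n)" for j
  proof -
    have "\<not> (n \<le> j \<and> even (j - n))"
    proof
      assume "n \<le> j \<and> even (j - n)"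
      then have "even (j - n)" by blast
      then obtain k where "j - n = 2*k" by (erule evenE)
      then have "j = 2*k+n" using \<open>n \<le> j \<and> even (j - n)\<close> by auto
      with that show False by auto
    qed
    then have "bc n j = 0" by (simp only: bc_def if_False)
    then show ?thesis by simp
  qed
  have "(\<lambda>k. bc n (2*k+n) * x^(2*k+n)) sums besselJ_nat n x"
    unfolding bc_term besselJ_nat_def using bessel_term_summable by (rule summable_sums)
  then show ?thesis using sums_mono_reindex[OF sm, of "\<lambda>j. bc n j * x^j"] z by blast
qed

lemma bc_summable: "summable (\<lambda>j. bc n j * x^j)"
  using bc_sums sums_summable by blast

lemma besselJ_nat_eq: "besselJ_nat n x = (\<Sum>j. bc n j * x^j)"
  using bc_sums sums_unique by metis



definition shr :: "(nat \<Rightarrow> real) \<Rightarrow> nat \<Rightarrow> real" where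
  "shr c j = (case j of 0 \<Rightarrow> 0 | Suc i \<Rightarrow> c i)"

lemma shr_sums:
  assumes "(\<lambda>j. c j * t^j) sums s"
  shows "(\<lambda>j. shr c j * t^j) sums (t * s)"
proof -
  have "(\<lambda>j. t * (c j * t^j)) sums (t * s)" using sums_mult[OF assms] .
  then have "(\<lambda>j. shr c (Suc j) * t^(Suc j)) sums (t * s)" by (simp add: shr_def mult_ac)
  then show ?thesis by (subst (asm) sums_Suc_iff) (simp add: shr_def)
qed

lemma bc_val: "bc n (2*k+n) = (-1)^k / (fact k * fact (k + n) * 2^(2*k+n))"
  by (simp add: bc_def)

lemma bc_zero: assumes "\<nexists>k. j = 2*k+n" shows "bc n j = 0"
proof -
  have "\<not> (n \<le> j \<and> even (j - n))"
  proof
    assume a: "n \<le> j \<and> even (j - n)"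
    then have "even (j - n)" by blast
    then obtain k where "j - n = 2*k" by (erule evenE)
    then have "j = 2*k+n" using a by auto
    with assms show False by auto
  qed
  then show ?thesis by (simp only: bc_def if_False)
qed

lemma bc_rec: "((real i + 2)^2 - (real n)^2) * bc n (i+2) + bc n i = 0"
proof (cases "\<exists>k. i = 2*k+n")
  case True
  then obtain k where i: "i = 2*k+n" by blast
  have i2: "i + 2 = 2*(Suc k)+n" using i by simp
  have A: "((real i + 2)^2 - (real n)^2) = 4 * (real k + 1) * (real k + 1 + real n)"
    unfolding i by (simp add: power2_eq_square algebra_simps)
  define F :: real where "F = fact k * fact (k + n) * 2^(2*k+n)"
  have F: "F > 0" unfolding F_def by simp
  have "bc n (2 * Suc k + n) = (-1)^(Suc k) / (fact (Suc k) * fact (Suc k + n) * 2^(2*Suc k+n))"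
    by (rule bc_val)
  also have "fact (Suc k) * fact (Suc k + n) * (2::real)^(2*Suc k+n) = F * (4 * (real k + 1) * (real k + 1 + real n))"
    unfolding F_def by (simp add: power_add algebra_simps)
  finally have b2: "bc n (2 * Suc k + n) = - ((-1)^k / F) / (4 * (real k + 1) * (real k + 1 + real n))"
    by simp
  have b1: "bc n (2*k+n) = (-1)^k / F" unfolding F_def by (rule bc_val)
  have nz: "4 * (real k + 1) * (real k + 1 + real n) \<noteq> 0" by simp
  have g: "\<And>Q y::real. Q \<noteq> 0 \<Longrightarrow> Q * (-y/Q) + y = 0" by simp
  show ?thesis unfolding i2 A b2 unfolding i b1 by (rule g[OF nz])
next
  case False
  then have b0: "bc n i = 0" by (rule bc_zero)
  show ?thesis
  proof (cases "\<exists>k. i + 2 = 2*k+n")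
    case True
    then obtain k where k: "i + 2 = 2*k+n" by blast
    show ?thesis
    proof (cases k)
      case 0 then have "real i + 2 = real n" using k by simp
      then show ?thesis using b0 by simp
    next
      case (Suc k') then have "i = 2*k'+n" using k by simp
      with False show ?thesis by blast
    qed
  next
    case False
    then show ?thesis using b0 bc_zero[OF False] by simp
  qed
qed

lemma shr_0[simp]: "shr c 0 = 0" and shr_Suc[simp]: "shr c (Suc i) = c i"
  by (simp_all add: shr_def)

definition P :: "(nat \<Rightarrow> real) \<Rightarrow> real \<Rightarrow> real" where
  "P c t = (\<Sum>j. c j * t^j)"

lemma bc_summable_all:
  "summable (\<lambda>j. bc n j * t^j)" "summable (\<lambda>j. diffs (bc n) j * t^j)" "summable (\<lambda>j. diffs (diffs (bc n)) j * t^j)"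
  using bc_summable termdiff_converges_all by blast+

lemma P_deriv: "(P (bc n) has_real_derivative P (diffs (bc n)) t) (at t)"
  "(P (diffs (bc n)) has_real_derivative P (diffs (diffs (bc n))) t) (at t)"
  unfolding P_def[abs_def]
  by (intro termdiffs_strong_converges_everywhere bc_summable_all)+


lemma c1: "n \<noteq> 1 \<Longrightarrow> bc n 1 = 0" by (intro bc_zero) presburger
lemma c0: "n \<noteq> 0 \<Longrightarrow> bc n 0 = 0" by (intro bc_zero) presburger
lemma c2: "diffs (bc n) 0 = bc n 1" by (simp add: diffs_def)
lemma c3: "diffs (diffs (bc n)) i = (real i + 1) * ((real i + 2) * bc n (i+2))"
      by (simp add: diffs_def algebra_simps)
lemma c4: "diffs (bc n) (Suc i) = (real i + 2) * bc n (i+2)"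
      by (simp add: diffs_def)

lemma bc_coef: "shr (shr (diffs (diffs (bc n)))) j + shr (diffs (bc n)) j + shr (shr (bc n)) j - (real n)^2 * bc n j = 0"
proof (cases j)
  case 0
  show ?thesis
  proof (cases "n = 0")
    case True then show ?thesis using \<open>j = 0\<close> by simp
  next
    case False then show ?thesis using \<open>j = 0\<close> c0 by simp
  qed
next
  case (Suc j')
  show ?thesis
  proof (cases j')
    case 0
    have "(1 - (real n)^2) * bc n 1 = 0"
      using c1[of n] by (cases "n = 1") auto
    then show ?thesis using Suc 0 c2 by (simp add: left_diff_distrib)
  next
    case (Suc i)
    have j: "j = Suc (Suc i)" using \<open>j = Suc j'\<close> Suc by simp
    have "shr (shr (diffs (diffs (bc n)))) j + shr (diffs (bc n)) j + shr (shr (bc n)) j - (real n)^2 * bc n j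
       = diffs (diffs (bc n)) i + diffs (bc n) (Suc i) + bc n i - (real n)^2 * bc n (i+2)"
      unfolding j by simp
    also have "\<dots> = ((real i + 2)^2 - (real n)^2) * bc n (i+2) + bc n i"
      unfolding c3 c4 by (simp only: power2_eq_square) (simp only: algebra_simps)
    finally show ?thesis using bc_rec by simp
  qed
qed
lemma bessel_ode:
  "t^2 * P (diffs (diffs (bc n))) t + t * P (diffs (bc n)) t + (t^2 - (real n)^2) * P (bc n) t = 0"
proof -
  note s = bc_summable_all[THEN summable_sums, folded P_def]
  have s1: "(\<lambda>j. shr (shr (diffs (diffs (bc n)))) j * t^j) sums (t * (t * P (diffs (diffs (bc n))) t))"
    by (intro shr_sums s)
  have s2: "(\<lambda>j. shr (diffs (bc n)) j * t^j) sums (t * P (diffs (bc n)) t)"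
    by (intro shr_sums s)
  have s3: "(\<lambda>j. shr (shr (bc n)) j * t^j) sums (t * (t * P (bc n) t))"
    by (intro shr_sums s)
  have s4: "(\<lambda>j. (real n)^2 * (bc n j * t^j)) sums ((real n)^2 * P (bc n) t)"
    by (intro sums_mult s)
  have "(\<lambda>j. shr (shr (diffs (diffs (bc n)))) j * t^j + shr (diffs (bc n)) j * t^j + shr (shr (bc n)) j * t^j - (real n)^2 * (bc n j * t^j))
     sums (t * (t * P (diffs (diffs (bc n))) t) + t * P (diffs (bc n)) t + t * (t * P (bc n) t) - (real n)^2 * P (bc n) t)"
    by (intro sums_add sums_diff s1 s2 s3 s4)
  moreover have "(\<lambda>j. shr (shr (diffs (diffs (bc n)))) j * t^j + shr (diffs (bc n)) j * t^j + shr (shr (bc n)) j * t^j - (real n)^2 * (bc n j * t^j)) = (\<lambda>j. 0)"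
  proof
    fix j
    have "shr (shr (diffs (diffs (bc n)))) j * t^j + shr (diffs (bc n)) j * t^j + shr (shr (bc n)) j * t^j - (real n)^2 * (bc n j * t^j)
       = (shr (shr (diffs (diffs (bc n)))) j + shr (diffs (bc n)) j + shr (shr (bc n)) j - (real n)^2 * bc n j) * t^j"
      by (simp add: algebra_simps)
    then show "shr (shr (diffs (diffs (bc n)))) j * t^j + shr (diffs (bc n)) j * t^j + shr (shr (bc n)) j * t^j - (real n)^2 * (bc n j * t^j) = 0"
      using bc_coef by simp
  qed
  ultimately have "(\<lambda>j. 0::real) sums (t * (t * P (diffs (diffs (bc n))) t) + t * P (diffs (bc n)) t + t * (t * P (bc n) t) - (real n)^2 * P (bc n) t)"
    by simp
  then have "t * (t * P (diffs (diffs (bc n))) t) + t * P (diffs (bc n)) t + t * (t * P (bc n) t) - (real n)^2 * P (bc n) t = 0"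
    using sums_unique sums_zero by metis
  then show ?thesis by (simp add: power2_eq_square algebra_simps)
qed



lemma alg: fixes x k a b :: real assumes "x^2 - k \<noteq> 0" "x \<noteq> 0" shows "a^2 + 2*(b*a)*x + ((2*((3*b + (-x*b - (x^2-(k+1/4))*a)/x^2*(2*x))*(2*x*b+a))*x + (2*x*b+a)^2)*(4*(x^2-k)) - (2*x*b+a)^2*x*(8*x))/(4*(x^2-k)*(4*(x^2-k))) = -k*(2*x*b+a)^2/(2*(x^2-k)^2)"
proof -
  define D where "D = x^2 - k"
  have k: "k = x^2 - D" unfolding D_def by simp
  have D: "D \<noteq> 0" using assms unfolding D_def by simp
  have e: "(-x*b - (x^2-((x^2 - D)+1/4))*a)/x^2*(2*x) = 2*(-x*b - (D - 1/4)*a)/x" using assms(2) by (simp add: field_simps power2_eq_square)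
  have d2: "x^2 - (x^2 - D) = D" by simp
  show ?thesis unfolding k e d2 using D assms(2) by (simp add: field_simps) algebra
qed




lemma energy1:
  fixes f f1 f2 :: "real \<Rightarrow> real" and k x :: real
  assumes df: "(f has_real_derivative f1 x) (at x)" and df1: "(f1 has_real_derivative f2 x) (at x)"
    and ode: "x^2 * f2 x + x * f1 x + (x^2 - (k + 1/4)) * f x = 0"
    and x: "x > 0" and xk: "x^2 - k > 0"
  shows "((\<lambda>t. t * f t ^2 + (2 * t * f1 t + f t)^2 * t / (4 * (t^2 - k))) has_real_derivative
           (- k * (2 * x * f1 x + f x)^2 / (2 * (x^2 - k)^2))) (at x)"
proof -
  have e: "f2 x = (- x * f1 x - (x^2 - (k + 1/4)) * f x) / x^2" using ode x by (simp add: field_simps power2_eq_square)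
  have nz: "x^2 - k \<noteq> 0" "x \<noteq> 0" using xk x by auto
  show ?thesis
    apply (rule derivative_eq_intros df df1 | simp)+
    subgoal using xk by simp
     apply (rule refl)
    unfolding e by (rule alg[OF nz])
qed


lemma alg2: fixes x a b :: real assumes "x \<noteq> 0" shows "((8 * x * a^2 + 2 * (b * a) * (4 * x^2 + 1) +
       2 * ((3 * b + (- x * b - x^2 * a) / x^2 * (2 * x)) * (2 * x * b + a))) * (4 * x) -
      ((4 * x^2 + 1) * a^2 + (2 * x * b + a)^2) * 4) / (4 * x * (4 * x)) = - (a^2) / (2 * x^2)"
proof -
  have e: "(- x * b - x^2 * a) / x^2 * (2 * x) = 2 * (- b - x * a)" using assms by (simp add: field_simps power2_eq_square)
  show ?thesis unfolding e using assms by (simp add: field_simps) algebra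
qed

lemma energy2:
  fixes f f1 f2 :: "real \<Rightarrow> real" and x :: real
  assumes df: "(f has_real_derivative f1 x) (at x)" and df1: "(f1 has_real_derivative f2 x) (at x)"
    and ode: "x^2 * f2 x + x * f1 x + x^2 * f x = 0"
    and x: "x > 0"
  shows "((\<lambda>t. ((4 * t^2 + 1) * f t ^2 + (2 * t * f1 t + f t)^2) / (4 * t)) has_real_derivative
           (- ((f x)^2) / (2 * x^2))) (at x)"
proof -
  have e: "f2 x = (- x * f1 x - x^2 * f x) / x^2" using ode x by (simp add: field_simps power2_eq_square)
  have nz: "x \<noteq> 0" using x by auto
  show ?thesis
    apply (rule derivative_eq_intros df df1 | simp)+
    subgoal using nz by simp
    unfolding e by (rule alg2[OF nz])
qed



lemma bessel_decay: "\<exists>C. \<forall>t \<ge> real n + 1. t * (besselJ_nat n t)^2 \<le> C"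
proof -
  define f where "f = P (bc n)"
  define f1 where "f1 = P (diffs (bc n))"
  define f2 where "f2 = P (diffs (diffs (bc n)))"
  have J: "besselJ_nat n t = f t" for t unfolding f_def P_def by (rule besselJ_nat_eq)
  have df: "(f has_real_derivative f1 x) (at x)" for x unfolding f_def f1_def by (rule P_deriv)
  have df1: "(f1 has_real_derivative f2 x) (at x)" for x unfolding f2_def f1_def by (rule P_deriv)
  have ode: "x^2 * f2 x + x * f1 x + (x^2 - (real n)^2) * f x = 0" for x
    unfolding f_def f1_def f2_def by (rule bessel_ode)
  show ?thesis
  proof (cases "n = 0")
    case True
    define E where "E = (\<lambda>t. ((4 * t^2 + 1) * f t ^2 + (2 * t * f1 t + f t)^2) / (4 * t))"
    have "t * (f t)^2 \<le> E 1" if t: "t \<ge> 1" for t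
    proof -
      have "E t \<le> E 1"
      proof (rule DERIV_nonpos_imp_nonincreasing[OF t])
        fix x assume x: "1 \<le> x" "x \<le> t"
        have "x^2 * f2 x + x * f1 x + x^2 * f x = 0" using ode[of x] True by simp
        from energy2[of f f1 x f2, OF df df1 this] x
        show "\<exists>y. (E has_real_derivative y) (at x) \<and> y \<le> 0"
          unfolding E_def by (intro exI conjI) (auto simp: divide_nonpos_pos)
      qed
      moreover have "t * (f t)^2 \<le> E t"
      proof -
        have eq: "(4 * t^2 + 1) * f t ^2 + (2 * t * f1 t + f t)^2 = 4*t*(t*(f t)^2) + (f t ^2 + (2 * t * f1 t + f t)^2)"
          by (simp add: algebra_simps power2_eq_square)
        have "4 * t * (t * (f t)^2) \<le> (4 * t^2 + 1) * f t ^2 + (2 * t * f1 t + f t)^2"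
          unfolding eq by simp
        then show ?thesis unfolding E_def using t by (simp add: field_simps)
      qed
      ultimately show ?thesis by linarith
    qed
    then show ?thesis using True unfolding J by auto
  next
    case False
    define k where "k = (real n)^2 - 1/4"
    have k: "k > 0" using False unfolding k_def
      by (metis One_nat_def Suc_leI diff_gt_0_iff_gt less_le_trans not_gr0 of_nat_1 of_nat_le_iff one_le_power power2_eq_square less_numeral_extra(1) divide_less_eq_1_pos one_less_numeral_iff semiring_norm(76) zero_less_numeral)
    have pos: "x^2 - k > 0" if "x \<ge> real n + 1" for x
    proof -
      have "(real n + 1)^2 \<le> x^2" using that by (intro power_mono) auto
      then show ?thesis unfolding k_def by (simp add: power2_eq_square algebra_simps)
    qed
    define E where "E = (\<lambda>t. t * f t ^2 + (2 * t * f1 t + f t)^2 * t / (4 * (t^2 - k)))"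
    have "t * (f t)^2 \<le> E (real n + 1)" if t: "t \<ge> real n + 1" for t
    proof -
      have "E t \<le> E (real n + 1)"
      proof (rule DERIV_nonpos_imp_nonincreasing[OF t])
        fix x assume x: "real n + 1 \<le> x" "x \<le> t"
        have "x^2 * f2 x + x * f1 x + (x^2 - (k + 1/4)) * f x = 0" using ode[of x] unfolding k_def by simp
        from energy1[of f f1 x f2 k, OF df df1 this _ pos[OF x(1)]] x k
        show "\<exists>y. (E has_real_derivative y) (at x) \<and> y \<le> 0"
          unfolding E_def by (intro exI conjI) (auto simp: divide_nonpos_pos)
      qed
      moreover have "t * (f t)^2 \<le> E t"
        unfolding E_def using t pos[OF t] by auto
      ultimately show ?thesis by linarith
    qed
    then show ?thesis unfolding J by auto
  qed
qed


lemma bessel_term_bound: "norm ((-1)^k / (fact k * fact (k + n)) * ((x::real) / 2) ^ (2 * k + n)) \<le> \<bar>x/2\<bar>^n * (inverse (fact k) * ((x/2)^2)^k)"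
proof -
    have f1: "(1::real) \<le> fact (k+n)" by simp
    have pa: "\<bar>(x/2)^(2*k+n)\<bar> = \<bar>x/2\<bar>^n * ((x/2)^2)^k"
    proof -
      have "\<bar>(x/2)^(2*k+n)\<bar> = \<bar>x/2\<bar>^(2*k) * \<bar>x/2\<bar>^n" by (simp add: power_abs power_add abs_mult)
      also have "\<bar>x/2\<bar>^(2*k) = ((x/2)^2)^k" by (metis power_mult power2_abs)
      finally show ?thesis by simp
    qed
    have "norm ((-1)^k / (fact k * fact (k + n)) * (x / 2) ^ (2 * k + n)) = \<bar>(x/2)^(2*k+n)\<bar> / (fact k * fact (k + n))"
      by (simp add: abs_mult abs_divide)
    also have "\<dots> = (\<bar>x/2\<bar>^n * (inverse (fact k) * ((x/2)^2)^k)) / fact (k+n)"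
      unfolding pa by (simp add: field_simps)
    also have "\<dots> \<le> \<bar>x/2\<bar>^n * (inverse (fact k) * ((x/2)^2)^k)"
      using frac_le[of "\<bar>x/2\<bar>^n * (inverse (fact k) * ((x/2)^2)^k)" "\<bar>x/2\<bar>^n * (inverse (fact k) * ((x/2)^2)^k)" 1 "fact (k+n)"] f1 by simp
    finally show ?thesis .
qed

lemma besselJ_nat_small: "\<bar>besselJ_nat n t\<bar> \<le> \<bar>t/2\<bar>^n * exp ((t/2)^2)"
proof -
  have s: "(\<lambda>k. inverse (fact k) * ((t/2)^2)^k) sums exp ((t/2)^2)"
    using exp_converges[of "(t/2)^2"] by (simp add: field_simps)
  have s2: "(\<lambda>k. \<bar>t/2\<bar>^n * (inverse (fact k) * ((t/2)^2)^k)) sums (\<bar>t/2\<bar>^n * exp ((t/2)^2))"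
    by (rule sums_mult[OF s])
  have "norm (besselJ_nat n t) \<le> (\<Sum>k. \<bar>t/2\<bar>^n * (inverse (fact k) * ((t/2)^2)^k))"
    unfolding besselJ_nat_def
    by (rule norm_suminf_le[OF bessel_term_bound]) (use s2 in \<open>rule sums_summable\<close>)
  then show ?thesis using sums_unique[OF s2] by simp
qed

lemma powr_neg_half: "(t::real) > 0 \<Longrightarrow> t powr (-1/2) = 1 / sqrt t"
proof -
  assume t: "t > 0"
  have h: "-1/2 = -(1/2::real)" by simp
  show ?thesis unfolding h powr_minus_divide using powr_half_sqrt[of t] t by simp
qed

lemma besselJ_nat_powr: "\<exists>C>0. \<forall>t>0. \<forall>b. -1/2 \<le> b \<and> b \<le> real n \<longrightarrow> \<bar>besselJ_nat n t\<bar> \<le> C * t powr b"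
proof -
  obtain C1 where C1: "\<And>t. t \<ge> real n + 1 \<Longrightarrow> t * (besselJ_nat n t)^2 \<le> C1"
    using bessel_decay by blast
  define C1' where "C1' = max C1 0"
  define T where "T = real n + 1"
  define B where "B = (T/2)^n * exp ((T/2)^2)"
  have T: "T \<ge> 1" unfolding T_def by simp
  have B: "B \<ge> 0" unfolding B_def using T by simp
  define C where "C = exp 1 + B * sqrt T + sqrt C1'"
  have C: "C > 0" unfolding C_def using B T by (simp add: add_pos_nonneg C1'_def)
  have main: "\<bar>besselJ_nat n t\<bar> \<le> C * t powr b" if t: "t > 0" and b: "-1/2 \<le> b" "b \<le> real n" for t b
  proof -
    have tb: "t powr b \<ge> 0" by simp
    have sT: "sqrt T \<ge> 0" "sqrt C1' \<ge> 0" using T by (auto simp: C1'_def)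
    consider "t \<le> 1" | "1 \<le> t" "t \<le> T" | "T \<le> t" by linarith
    then show ?thesis
    proof cases
      case 1
      have "\<bar>besselJ_nat n t\<bar> \<le> \<bar>t/2\<bar>^n * exp ((t/2)^2)" by (rule besselJ_nat_small)
      also have "\<dots> \<le> t^n * exp 1"
      proof (rule mult_mono)
        show "\<bar>t/2\<bar>^n \<le> t^n" using t by (intro power_mono) auto
        have "(t/2)^2 \<le> 1" using t 1 by (intro power_le_one) simp_all
        then show "exp ((t/2)^2) \<le> exp 1" by simp
      qed (use t in auto)
      also have "t^n = t powr (real n)" using t by (simp add: powr_realpow)
      also have "t powr (real n) \<le> t powr b" using b t 1 by (intro powr_mono') simp_all
      finally have "\<bar>besselJ_nat n t\<bar> \<le> exp 1 * t powr b" by (simp add: mult.commute)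
      also have "\<dots> \<le> C * t powr b" unfolding C_def using B sT tb
        by (intro mult_right_mono) auto
      finally show ?thesis .
    next
      case 2
      have "\<bar>besselJ_nat n t\<bar> \<le> \<bar>t/2\<bar>^n * exp ((t/2)^2)" by (rule besselJ_nat_small)
      also have "\<dots> \<le> B" unfolding B_def
      proof (rule mult_mono)
        show "\<bar>t/2\<bar>^n \<le> (T/2)^n" using t 2 by (intro power_mono) auto
        have "(t/2)^2 \<le> (T/2)^2" using t 2 by (intro power_mono) auto
        then show "exp ((t/2)^2) \<le> exp ((T/2)^2)" by simp
      qed (use T in auto)
      also have "B \<le> B * sqrt T * t powr b"
      proof -
        have "t powr (-1/2) \<le> t powr b" using b 2 by (intro powr_mono) simp_all
        moreover have "t powr (-1/2) = 1 / sqrt t" using t by (rule powr_neg_half)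
        moreover have "1 / sqrt T \<le> 1 / sqrt t" using 2 t by (intro divide_left_mono) simp_all
        ultimately have l: "1 / sqrt T \<le> t powr b" by linarith
        have "1 = sqrt T * (1 / sqrt T)" using T by simp
        also have "\<dots> \<le> sqrt T * t powr b" using l T by (intro mult_left_mono) auto
        finally have "1 \<le> sqrt T * t powr b" .
        then have "B * 1 \<le> B * (sqrt T * t powr b)" using B by (intro mult_left_mono) auto
        then show ?thesis by (simp add: mult.assoc)
      qed
      also have "\<dots> \<le> C * t powr b" unfolding C_def using B sT tb
        by (intro mult_right_mono) auto
      finally show ?thesis .
    next
      case 3
      have "t * (besselJ_nat n t)^2 \<le> C1'" using C1[of t] 3 unfolding T_def C1'_def by auto
      then have "(besselJ_nat n t)^2 \<le> C1' / t" using t by (simp add: field_simps)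
      then have "sqrt ((besselJ_nat n t)^2) \<le> sqrt (C1' / t)" by (rule real_sqrt_le_mono)
      then have "\<bar>besselJ_nat n t\<bar> \<le> sqrt C1' * (1 / sqrt t)" by (simp add: real_sqrt_divide)
      also have "1 / sqrt t = t powr (-1/2)" using t by (rule powr_neg_half[symmetric])
      also have "t powr (-1/2) \<le> t powr b" using b 3 T by (intro powr_mono) simp_all
      also have "sqrt C1' * t powr b \<le> C * t powr b" unfolding C_def using B sT tb
        by (intro mult_right_mono) auto
      finally show ?thesis using sT by (simp add: mult_left_mono)
    qed
  qed
  show ?thesis using C main by blast
qed


lemma besselJ_powr: "\<exists>C>0. \<forall>t>0. \<forall>b. -1/2 \<le> b \<and> b \<le> real_of_int \<bar>m\<bar> \<longrightarrow> \<bar>besselJ m t\<bar> \<le> C * t powr b"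
proof -
  obtain C where C: "C > 0" "\<And>t b. t > 0 \<Longrightarrow> -1/2 \<le> b \<Longrightarrow> b \<le> real (nat \<bar>m\<bar>) \<Longrightarrow> \<bar>besselJ_nat (nat \<bar>m\<bar>) t\<bar> \<le> C * t powr b"
    using besselJ_nat_powr[of "nat \<bar>m\<bar>"] by blast
  have e: "\<bar>besselJ m t\<bar> = \<bar>besselJ_nat (nat \<bar>m\<bar>) t\<bar>" for t
    by (cases "0 \<le> m") (simp_all add: besselJ_def abs_mult)
  have r: "real (nat \<bar>m\<bar>) = real_of_int \<bar>m\<bar>" by simp
  show ?thesis using C unfolding e r by blast
qed

lemma j0_bound: "\<exists>C>0. \<forall>t>0. \<forall>b. -1/2 \<le> b \<and> b \<le> real_of_int \<bar>m\<bar> \<longrightarrow> norm (j0 m t) \<le> C * t powr b"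
proof -
  obtain C where C: "C > 0" "\<And>t b. t > 0 \<Longrightarrow> -1/2 \<le> b \<Longrightarrow> b \<le> real_of_int \<bar>m\<bar> \<Longrightarrow> \<bar>besselJ m t\<bar> \<le> C * t powr b"
    using besselJ_powr[of m] by blast
  define C' where "C' = 2 * pi * C * (4 * pi) powr (real_of_int \<bar>m\<bar>)"
  have "C' > 0" unfolding C'_def using C by simp
  moreover have "norm (j0 m t) \<le> C' * t powr b" if t: "t > 0" and b: "-1/2 \<le> b" "b \<le> real_of_int \<bar>m\<bar>" for t b
  proof -
    have "norm (j0 m t) = 2 * pi * \<bar>besselJ m (4 * pi * t)\<bar>"
      unfolding j0_def by (simp add: norm_mult norm_power_int)
    also have "\<dots> \<le> 2 * pi * (C * (4 * pi * t) powr b)"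
      using C(2)[of "4 * pi * t" b] t b by (intro mult_left_mono) simp_all
    also have "(4 * pi * t) powr b = (4 * pi) powr b * t powr b"
      using t by (simp add: powr_mult)
    also have "(4 * pi) powr b \<le> (4 * pi) powr (real_of_int \<bar>m\<bar>)"
    proof (rule powr_mono[OF b(2)])
      show "1 \<le> 4 * pi" using pi_gt3 by linarith
    qed
    then have "2 * pi * (C * ((4 * pi) powr b * t powr b)) \<le> 2 * pi * (C * ((4 * pi) powr (real_of_int \<bar>m\<bar>) * t powr b))"
      using C(1) by (intro mult_left_mono mult_right_mono) simp_all
    finally show ?thesis unfolding C'_def by (simp add: mult_ac)
  qed
  ultimately show ?thesis by blast
qed

lemma besselJ_nat_cont: "continuous_on UNIV (besselJ_nat n)"
proof -
  have "besselJ_nat n = P (bc n)" unfolding P_def by (rule ext) (rule besselJ_nat_eq)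
  then show ?thesis
    by (metis P_deriv(1) DERIV_isCont continuous_at_imp_continuous_on)
qed

lemma besselJ_cont: "continuous_on UNIV (besselJ m)"
proof (cases "0 \<le> m")
  case True
  then have "besselJ m = besselJ_nat (nat m)" by (simp add: besselJ_def[abs_def])
  then show ?thesis using besselJ_nat_cont by simp
next
  case False
  then have "besselJ m = (\<lambda>x. (-1) ^ nat (- m) * besselJ_nat (nat (- m)) x)" by (simp add: besselJ_def[abs_def])
  then show ?thesis using besselJ_nat_cont by (auto intro!: continuous_intros)
qed

lemma j0_cont: "continuous_on UNIV (j0 m)"
proof -
  have c: "continuous_on UNIV (\<lambda>x. besselJ m (4 * pi * x))"
    by (rule continuous_on_compose2[OF besselJ_cont]) (auto intro!: continuous_intros)
  show ?thesis unfolding j0_def[abs_def]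
    by (intro continuous_intros continuous_on_of_real c)
qed

lemma j0_meas[measurable]: "j0 m \<in> borel_measurable borel"
  by (rule borel_measurable_continuous_onI[OF j0_cont])

lemma cpowr_meas[measurable]: "(\<lambda>t::real. complex_of_real t powr w) \<in> borel_measurable borel"
  unfolding powr_def by measurable



lemma powr_piece_0: assumes "e > -1" "x > 0"
  shows "integrable lborel (\<lambda>t::real. indicator {0<..x} t * t powr e)"
proof -
  have "(\<lambda>t::real. t powr e) absolutely_integrable_on {0<..x}"
    by (rule nonnegative_absolutely_integrable_1[OF integrable_on_powr_from_0']) (use assms in auto)
  then have "integrable lebesgue (\<lambda>t::real. indicator {0<..x} t *\<^sub>R t powr e)"
    unfolding set_integrable_def .
  then show ?thesis by (subst (asm) integrable_completion) (auto simp: mult_ac)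
qed

lemma powr_piece_inf: assumes "e < -1" "x > 0"
  shows "integrable lborel (\<lambda>t::real. indicator {x<..} t * t powr e)"
proof -
  have "(\<lambda>t::real. t powr e) integrable_on {x..}"
    using has_integral_powr_to_inf[OF assms] unfolding integrable_on_def by blast
  then have "(\<lambda>t::real. t powr e) absolutely_integrable_on {x..}"
    by (rule nonnegative_absolutely_integrable_1) auto
  then have "set_integrable lebesgue {x<..} (\<lambda>t::real. t powr e)"
    by (rule set_integrable_subset) auto
  then have "integrable lebesgue (\<lambda>t::real. indicator {x<..} t *\<^sub>R t powr e)"
    unfolding set_integrable_def .
  then show ?thesis by (subst (asm) integrable_completion) (auto simp: mult_ac)
qed

definition Gb :: "real \<Rightarrow> real \<Rightarrow> real \<Rightarrow> real \<Rightarrow> real \<Rightarrow> real \<Rightarrow> real" where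
  "Gb c s x p q t = (if 0 < t then c * t powr s * (if t \<le> x then (x/t) powr p else (x/t) powr q) else 0)"

lemma Gb_nonneg: "c \<ge> 0 \<Longrightarrow> Gb c s x p q t \<ge> 0"
  unfolding Gb_def by auto

lemma powr_ratio: fixes x t c s p :: real assumes "x > 0" "t > 0"
  shows "c * t powr s * (x/t) powr p = (c * x powr p) * t powr (s - p)"
proof -
  have "(x/t) powr p = x powr p / t powr p" by (rule powr_divide)
  moreover have "t powr s / t powr p = t powr (s - p)" by (simp add: powr_diff)
  ultimately show ?thesis by (metis (no_types, lifting) mult.assoc mult.commute times_divide_eq_right)
qed

lemma Gb_integrable: assumes "x > 0" "s - p > -1" "s - q < -1"
  shows "integrable lborel (Gb c s x p q)"
proof -
  have eq: "Gb c s x p q = (\<lambda>t. (c * x powr p) * (indicator {0<..x} t * t powr (s - p)) + (c * x powr q) * (indicator {x<..} t * t powr (s - q)))"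
  proof
    fix t :: real
    consider "t \<le> 0" | "0 < t" "t \<le> x" | "x < t" by linarith
    then show "Gb c s x p q t = (c * x powr p) * (indicator {0<..x} t * t powr (s - p)) + (c * x powr q) * (indicator {x<..} t * t powr (s - q))"
    proof cases
      case 1 then show ?thesis unfolding Gb_def using assms(1) by (simp add: indicator_def)
    next
      case 2 then show ?thesis unfolding Gb_def using powr_ratio[OF assms(1) 2(1), of c s p] by (simp add: indicator_def)
    next
      case 3
      then have "t > 0" using assms(1) by simp
      then show ?thesis unfolding Gb_def using powr_ratio[OF assms(1) \<open>t > 0\<close>, of c s q] 3 by (simp add: indicator_def)
    qed
  qed
  show ?thesis unfolding eq
    by (intro Bochner_Integration.integrable_add integrable_mult_right powr_piece_0 powr_piece_inf) (use assms in auto)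
qed



lemma factor_bound:
  fixes t x a C :: real and w :: complex and mm :: int
  assumes t: "t > 0" and x: "x > 0"
    and Cf: "\<forall>t>0. \<forall>b. -1/2 \<le> b \<and> b \<le> real_of_int \<bar>mm\<bar> \<longrightarrow> norm (j0 mm t) \<le> C * t powr b"
  shows "t powr a * norm (complex_of_real t powr w * j0 mm (x / t)) \<le> Gb C (a + Re w) x (-1/2) (real_of_int \<bar>mm\<bar>) t"
proof -
  define b where "b = (if t \<le> x then -1/2 else real_of_int \<bar>mm\<bar>)"
  have b: "-1/2 \<le> b" "b \<le> real_of_int \<bar>mm\<bar>" unfolding b_def by auto
  have G: "Gb C (a + Re w) x (-1/2) (real_of_int \<bar>mm\<bar>) t = C * t powr (a + Re w) * (x/t) powr b"
    unfolding Gb_def b_def using t by simp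
  have xt: "x / t > 0" using x t by simp
  have N: "norm (j0 mm (x / t)) \<le> C * (x/t) powr b" using Cf xt b by blast
  have "norm (complex_of_real t powr w) = t powr Re w"
    using t by (subst norm_powr_real_powr) auto
  then have "t powr a * norm (complex_of_real t powr w * j0 mm (x / t)) = t powr a * t powr Re w * norm (j0 mm (x / t))"
    by (simp add: norm_mult mult.assoc)
  also have "\<dots> \<le> t powr a * t powr Re w * (C * (x/t) powr b)"
    using N by (intro mult_left_mono) simp_all
  also have "\<dots> = C * t powr (a + Re w) * (x/t) powr b"
    by (simp add: powr_add mult_ac)
  finally show ?thesis unfolding G .
qed



theorem proposition6p4:
  fixes d :: nat and \<nu> :: "nat \<Rightarrow> complex" and m :: "nat \<Rightarrow> int" and x :: real
  assumes "d \<ge> 1"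
    and "\<exists>a::real. -1/2 \<le> a \<and> a \<le> real_of_int \<bar>m d\<bar> \<and>
           (\<forall>l<d. (1/2) * (-1/2 - a) < Re (\<nu> l) \<and> Re (\<nu> l) < (1/2) * (real_of_int \<bar>m l\<bar> - a))"
    and "x > 0"
  shows "set_integrable (PiM {..<d} (\<lambda>_. lborel))
           {y \<in> space (PiM {..<d} (\<lambda>_. lborel)). \<forall>l<d. y l > 0}
           (\<lambda>y. 2 ^ d * j0 (m d) (x * (\<Prod>l<d. y l)) *
                 (\<Prod>l<d. complex_of_real (y l) powr (2 * \<nu> l - 1) * j0 (m l) (x / y l)))"
proof -
  obtain a :: real where a: "-1/2 \<le> a" "a \<le> real_of_int \<bar>m d\<bar>"
    and anu: "\<And>l. l < d \<Longrightarrow> (1/2) * (-1/2 - a) < Re (\<nu> l) \<and> Re (\<nu> l) < (1/2) * (real_of_int \<bar>m l\<bar> - a)"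
    using assms(2) by blast
  have x: "x > 0" by fact
  define M where "M = PiM {..<d} (\<lambda>_. lborel :: real measure)"
  define A where "A = {y \<in> space M. \<forall>l<d. y l > 0}"
  define F where "F = (\<lambda>y. 2 ^ d * j0 (m d) (x * (\<Prod>l<d. y l)) *
                 (\<Prod>l<d. complex_of_real (y l) powr (2 * \<nu> l - 1) * j0 (m l) (x / y l)))"
  obtain Cd where Cd: "Cd > 0" "\<forall>t>0. \<forall>b. -1/2 \<le> b \<and> b \<le> real_of_int \<bar>m d\<bar> \<longrightarrow> norm (j0 (m d) t) \<le> Cd * t powr b"
    using j0_bound by blast
  have "\<forall>l. \<exists>C. C > 0 \<and> (\<forall>t>0. \<forall>b. -1/2 \<le> b \<and> b \<le> real_of_int \<bar>m l\<bar> \<longrightarrow> norm (j0 (m l) t) \<le> C * t powr b)"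
    using j0_bound by blast
  then obtain Cf where Cf: "\<And>l. Cf l > 0" "\<And>l. \<forall>t>0. \<forall>b. -1/2 \<le> b \<and> b \<le> real_of_int \<bar>m l\<bar> \<longrightarrow> norm (j0 (m l) t) \<le> Cf l * t powr b"
    by metis
  define G where "G = (\<lambda>l. Gb (Cf l) (a + Re (2 * \<nu> l - 1)) x (-1/2) (real_of_int \<bar>m l\<bar>))"
  define K where "K = 2 ^ d * Cd * x powr a"
  have K: "K \<ge> 0" unfolding K_def using Cd by simp
  interpret product_sigma_finite "\<lambda>_. lborel :: real measure" by standard
  have intG: "integrable lborel (G l)" if "l < d" for l
  proof -
    have h: "(1/2) * (-1/2 - a) < Re (\<nu> l)" "Re (\<nu> l) < (1/2) * (real_of_int \<bar>m l\<bar> - a)" using anu[OF that] by auto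
    show ?thesis unfolding G_def
      by (rule Gb_integrable[OF x]) (use h in auto)
  qed
  have intH: "integrable M (\<lambda>y. K * (\<Prod>l\<in>{..<d}. G l (y l)))"
    unfolding M_def by (intro integrable_mult_right product_integrable_prod intG) auto
  have Gnn: "G l t \<ge> 0" for l t unfolding G_def by (rule Gb_nonneg) (use Cf in \<open>simp add: less_imp_le\<close>)
  have Ameas: "A \<in> sets M" unfolding A_def M_def by measurable
  have Fmeas: "F \<in> borel_measurable M" unfolding F_def M_def by measurable
  have bound: "norm (indicator A y *\<^sub>R F y) \<le> norm (K * (\<Prod>l\<in>{..<d}. G l (y l)))" for y
  proof (cases "y \<in> A")
    case False
    then show ?thesis by simp
  next
    case True
    then have yp: "\<And>l. l < d \<Longrightarrow> y l > 0" unfolding A_def by auto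
    define P where "P = (\<Prod>l<d. y l)"
    have P: "P > 0" unfolding P_def using yp by (intro prod_pos) auto
    have xP: "x * P > 0" using x P by simp
    have "norm (j0 (m d) (x * P)) \<le> Cd * (x * P) powr a" using Cd(2) xP a by blast
    also have "(x * P) powr a = x powr a * (\<Prod>l<d. y l powr a)"
      unfolding P_def using x yp by (simp add: powr_mult prod_powr_distrib less_imp_le prod_nonneg)
    finally have Jd: "norm (j0 (m d) (x * P)) \<le> Cd * (x powr a * (\<Prod>l<d. y l powr a))" .
    have "norm (F y) = 2 ^ d * norm (j0 (m d) (x * P)) * (\<Prod>l<d. norm (complex_of_real (y l) powr (2 * \<nu> l - 1) * j0 (m l) (x / y l)))"
      unfolding F_def P_def by (simp add: norm_mult prod_norm[symmetric] norm_power)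
    also have "\<dots> \<le> 2 ^ d * (Cd * (x powr a * (\<Prod>l<d. y l powr a))) * (\<Prod>l<d. norm (complex_of_real (y l) powr (2 * \<nu> l - 1) * j0 (m l) (x / y l)))"
      using Jd by (intro mult_right_mono mult_left_mono) (simp_all add: prod_nonneg)
    also have "\<dots> = K * (\<Prod>l<d. y l powr a * norm (complex_of_real (y l) powr (2 * \<nu> l - 1) * j0 (m l) (x / y l)))"
      unfolding K_def by (simp add: prod.distrib mult_ac)
    also have "\<dots> \<le> K * (\<Prod>l<d. G l (y l))"
    proof (intro mult_left_mono K prod_mono conjI)
      fix l assume "l \<in> {..<d}"
      then have l: "l < d" by simp
      show "0 \<le> y l powr a * norm (complex_of_real (y l) powr (2 * \<nu> l - 1) * j0 (m l) (x / y l))" by simp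
      show "y l powr a * norm (complex_of_real (y l) powr (2 * \<nu> l - 1) * j0 (m l) (x / y l)) \<le> G l (y l)"
        unfolding G_def by (rule factor_bound[OF yp[OF l] x Cf(2)])
    qed
    finally have "norm (F y) \<le> K * (\<Prod>l<d. G l (y l))" .
    moreover have "K * (\<Prod>l<d. G l (y l)) \<ge> 0" using K Gnn by (simp add: prod_nonneg)
    ultimately show ?thesis using True by simp
  qed
  have "integrable M (\<lambda>y. indicator A y *\<^sub>R F y)"
    by (rule Bochner_Integration.integrable_bound[OF intH]) (use Ameas Fmeas bound in auto)
  then show ?thesis unfolding set_integrable_def M_def A_def F_def .
qed


end
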